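(* Let $G=(V,E)$ be a graph, $v\in V$, $d\ge 1$ an embedding dimension, $\alpha\in(0,1)$ the PageRank decay factor and $\epsilon>0$ the PPR precision. The algorithm $\textsc{InstantEmbedding}(v,G,d,\epsilon)$ (described in the context) has running time $O\!\left(d + \frac{1}{\alpha(1-\alpha)\epsilon}\right)$; in particular it is independent of the number of nodes $n$ and edges $m$ of $G$.
   Context: $G=(V,E)$ is an unweighted graph with $n=|V|$ nodes, $m=|E|$ edges, adjacency matrix $\mathbf{A}$ and diagonal degree matrix $\mathbf{D}$; $\deg(u)$ denotes the degree of $u$; the graph is accessed via adjacency-list queries and hash functions are evaluated in constant time. For a starting distribution $\mathbf{s}$ and decay factor $\alpha\in(0,1)$, the Personalized PageRank vector $\pi(\mathbf{s})$ is defined by $\pi(\mathbf{s}) = \alpha\mathbf{s} + (1-\alpha)\pi(\mathbf{s})^\top\mathbf{D}^{-1}\mathbf{A}$; $\pi_v=\pi(\mathbf{e}_v)$. $\mathrm{SparsePPR}(v,G,\epsilon)$ is the local push approximation of Andersen, Chung and Lang (2007): start with $p=\mathbf{0}$, residual $r=\mathbf{e}_v$; while there is a node $u$ with $r_u \ge \epsilon\deg(u)$, perform a push at $u$: $p_u \mathrel{+}= \alpha r_u$, distribute the remaining residual mass $(1-\alpha)r_u$ of $u$ (in the lazy variant, half kept at $u$ and half spread equally over the neighbors of $u$), and update $r$ accordingly; finally return the sparse vector $p$ listing its nonzero entries. Let $h_d:\mathbb{N}\to\{0,\dots,d-1\}$ and $h_{\mathrm{sgn}}:\mathbb{N}\to\{-1,1\}$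 be hash functions drawn from universal hash families. $\textsc{InstantEmbedding}(v,G,d,\epsilon)$: compute $\pi_v \leftarrow \mathrm{SparsePPR}(v,G,\epsilon)$; set $\mathbf{w}\leftarrow\mathbf{0}_d$; for each nonzero entry $r_j$ of $\pi_v$ (indexed by node $j$), do $\mathbf{w}_{h_d(j)} \mathrel{+}= h_{\mathrm{sgn}}(j)\cdot\max(\log(r_j n),0)$; return $\mathbf{w}$. *)

theory Defs
  imports Complex_Main
begin

text \<open>The algorithm state of SparsePPR is
  the pair (p, r) of the approximation vector and the residual vector.\<close>

definition deg :: "(nat \<Rightarrow> nat \<Rightarrow> bool) \<Rightarrow> nat set \<Rightarrow> nat \<Rightarrow> nat" where
  "deg E V u = card {w \<in> V. E u w}"

definition graph_ok :: "nat set \<Rightarrow> (nat \<Rightarrow> nat \<Rightarrow> bool) \<Rightarrow> bool" where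
  "graph_ok V E \<longleftrightarrow> finite V \<and> (\<forall>u w. E u w \<longrightarrow> u \<in> V \<and> w \<in> V)
     \<and> (\<forall>u w. E u w \<longrightarrow> E w u) \<and> (\<forall>u. \<not> E u u)"

definition push :: "bool \<Rightarrow> (nat \<Rightarrow> nat \<Rightarrow> bool) \<Rightarrow> nat set \<Rightarrow> real \<Rightarrow> nat
     \<Rightarrow> (nat \<Rightarrow> real) \<times> (nat \<Rightarrow> real) \<Rightarrow> (nat \<Rightarrow> real) \<times> (nat \<Rightarrow> real)" where
  "push lazy E V \<alpha> u s =
    (let p = fst s; r = snd s; ru = r u; k = real (deg E V u) in
     (p(u := p u + \<alpha> * ru),
      (if lazy then
         (\<lambda>w. (if w = u then (1 - \<alpha>) * ru / 2 else r w)
               + (if E u w then (1 - \<alpha>) * ru / (2 * k) else 0))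
       else
         (\<lambda>w. (if w = u then 0 else r w)
               + (if E u w then (1 - \<alpha>) * ru / k else 0)))))"

definition ppr_init :: "nat \<Rightarrow> (nat \<Rightarrow> real) \<times> (nat \<Rightarrow> real)" where
  "ppr_init v = ((\<lambda>_. 0), (\<lambda>w. if w = v then 1 else 0))"

fun valid_pushes :: "bool \<Rightarrow> (nat \<Rightarrow> nat \<Rightarrow> bool) \<Rightarrow> nat set \<Rightarrow> real \<Rightarrow> real
     \<Rightarrow> (nat \<Rightarrow> real) \<times> (nat \<Rightarrow> real) \<Rightarrow> nat list \<Rightarrow> bool" where
  "valid_pushes lazy E V \<alpha> \<epsilon> s [] = True"
| "valid_pushes lazy E V \<alpha> \<epsilon> s (u # us) =
     (u \<in> V \<and> snd s u \<ge> \<epsilon> * real (deg E V u)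
      \<and> valid_pushes lazy E V \<alpha> \<epsilon> (push lazy E V \<alpha> u s) us)"

fun run_pushes :: "bool \<Rightarrow> (nat \<Rightarrow> nat \<Rightarrow> bool) \<Rightarrow> nat set \<Rightarrow> real
     \<Rightarrow> (nat \<Rightarrow> real) \<times> (nat \<Rightarrow> real) \<Rightarrow> nat list \<Rightarrow> (nat \<Rightarrow> real) \<times> (nat \<Rightarrow> real)" where
  "run_pushes lazy E V \<alpha> s [] = s"
| "run_pushes lazy E V \<alpha> s (u # us) = run_pushes lazy E V \<alpha> (push lazy E V \<alpha> u s) us"

text \<open>Running time of InstantEmbedding when SparsePPR performs the pushes us:
  d for initialising w; deg(u) + 1 for each push at u (constant work plus one
  update per neighbour); and one unit per nonzero entry of the returned sparse
  vector p (constant-time hash evaluations and update of w).\<close>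
definition ie_cost :: "bool \<Rightarrow> (nat \<Rightarrow> nat \<Rightarrow> bool) \<Rightarrow> nat set \<Rightarrow> real \<Rightarrow> nat
     \<Rightarrow> nat \<Rightarrow> nat list \<Rightarrow> real" where
  "ie_cost lazy E V \<alpha> v d us =
     real d + (\<Sum>u\<leftarrow>us. real (deg E V u) + 1)
     + real (card {j \<in> V. fst (run_pushes lazy E V \<alpha> (ppr_init v) us) j \<noteq> 0})"

end

theory Submission
  imports Defs
begin

lemma sum_upd_aux:
  assumes "finite V" "u \<in> V"
  shows "(\<Sum>w\<in>V. if w = u then a else r w) = sum r V - r u + (a::real)"
proof -
  have "(\<Sum>w\<in>V. if w = u then a else r w) = a + (\<Sum>w\<in>V-{u}. if w = u then a else r w)"
    using sum.remove[OF assms, of "\<lambda>w. if w = u then a else r w"] by simp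
  also have "(\<Sum>w\<in>V-{u}. if w = u then a else r w) = (\<Sum>w\<in>V-{u}. r w)"
    by (rule sum.cong) auto
  also have "sum r V = r u + (\<Sum>w\<in>V-{u}. r w)" using sum.remove[OF assms] by simp
  ultimately show ?thesis by simp
qed

lemma sum_nbr_aux:
  assumes "finite V"
  shows "(\<Sum>w\<in>V. if E u w then c else 0) = real (deg E V u) * (c::real)"
proof -
  have "(\<Sum>w\<in>V. if E u w then c else 0) = (\<Sum>w\<in>{w\<in>V. E u w}. c)"
    using sum.inter_filter[OF assms, of "\<lambda>_. c" "E u"] by simp
  then show ?thesis by (simp add: deg_def)
qed

lemma push_props:
  assumes g: "graph_ok V E" and dg: "\<forall>u\<in>V. deg E V u \<ge> 1" and u: "u \<in> V"
    and a: "0 < \<alpha>" "\<alpha> < 1" and nn: "\<forall>w. snd s w \<ge> 0"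
  shows "(\<forall>w. snd (push lazy E V \<alpha> u s) w \<ge> 0) \<and>
         sum (snd (push lazy E V \<alpha> u s)) V = sum (snd s) V - \<alpha> * snd s u"
proof -
  have fin: "finite V" using g by (simp add: graph_ok_def)
  define r where "r = snd s"
  define k where "k = real (deg E V u)"
  have k: "k \<ge> 1" using dg u by (simp add: k_def)
  have ru: "r u \<ge> 0" using nn r_def by simp
  have rn: "\<forall>w. r w \<ge> 0" using nn r_def by simp
  show ?thesis
  proof (cases lazy)
    case True
    have e: "snd (push lazy E V \<alpha> u s) = (\<lambda>w. (if w = u then (1 - \<alpha>) * r u / 2 else r w)
               + (if E u w then (1 - \<alpha>) * r u / (2 * k) else 0))"
      using True unfolding r_def k_def by (simp add: push_def Let_def)
    have s1: "sum (snd (push lazy E V \<alpha> u s)) V = (sum r V - r u + (1 - \<alpha>) * r u / 2)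
        + k * ((1 - \<alpha>) * r u / (2 * k))"
      unfolding e sum.distrib sum_upd_aux[OF fin u] sum_nbr_aux[OF fin] k_def by simp
    have "k * ((1 - \<alpha>) * r u / (2 * k)) = (1 - \<alpha>) * r u / 2" using k by simp
    then have s3: "sum (snd (push lazy E V \<alpha> u s)) V = sum r V - r u + (1 - \<alpha>) * r u / 2 + (1 - \<alpha>) * r u / 2"
      using s1 by (simp only:)
    have s2: "sum (snd (push lazy E V \<alpha> u s)) V = sum r V - \<alpha> * r u"
      unfolding s3 by (simp add: field_simps)
    have "\<forall>w. snd (push lazy E V \<alpha> u s) w \<ge> 0"
      unfolding e using rn ru a k by (auto intro!: add_nonneg_nonneg divide_nonneg_pos)
    then show ?thesis using s2 r_def by simp
  next
    case False
    have e: "snd (push lazy E V \<alpha> u s) = (\<lambda>w. (if w = u then 0 else r w)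
               + (if E u w then (1 - \<alpha>) * r u / k else 0))"
      using False unfolding r_def k_def by (simp add: push_def Let_def)
    have s1: "sum (snd (push lazy E V \<alpha> u s)) V = (sum r V - r u + 0)
        + k * ((1 - \<alpha>) * r u / k)"
      unfolding e sum.distrib sum_upd_aux[OF fin u] sum_nbr_aux[OF fin] k_def by simp
    have "k * ((1 - \<alpha>) * r u / k) = (1 - \<alpha>) * r u" using k by simp
    then have s3: "sum (snd (push lazy E V \<alpha> u s)) V = sum r V - r u + 0 + (1 - \<alpha>) * r u"
      using s1 by (simp only:)
    have s2: "sum (snd (push lazy E V \<alpha> u s)) V = sum r V - \<alpha> * r u"
      unfolding s3 by (simp add: field_simps)
    have "\<forall>w. snd (push lazy E V \<alpha> u s) w \<ge> 0"
      unfolding e using rn ru a k by (auto intro!: add_nonneg_nonneg divide_nonneg_pos)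
    then show ?thesis using s2 r_def by simp
  qed
qed

lemma deg_bound:
  assumes g: "graph_ok V E" and dg: "\<forall>u\<in>V. deg E V u \<ge> 1"
    and a: "0 < \<alpha>" "\<alpha> < 1"
  shows "(\<forall>w. snd s w \<ge> 0) \<Longrightarrow> valid_pushes lazy E V \<alpha> \<epsilon> s us \<Longrightarrow>
     \<alpha> * \<epsilon> * (\<Sum>u\<leftarrow>us. real (deg E V u)) \<le> sum (snd s) V"
proof (induction us arbitrary: s)
  case Nil
  have "finite V" using g by (simp add: graph_ok_def)
  then show ?case using Nil sum_nonneg by (simp add: sum_nonneg)
next
  case (Cons u us)
  have u: "u \<in> V" and th: "snd s u \<ge> \<epsilon> * real (deg E V u)"
    and vp: "valid_pushes lazy E V \<alpha> \<epsilon> (push lazy E V \<alpha> u s) us" using Cons.prems by auto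
  note P = push_props[OF g dg u a Cons.prems(1), of lazy]
  have IH: "\<alpha> * \<epsilon> * (\<Sum>u\<leftarrow>us. real (deg E V u)) \<le> sum (snd s) V - \<alpha> * snd s u"
    using Cons.IH[OF _ vp] P by simp
  have "\<alpha> * (\<epsilon> * real (deg E V u)) \<le> \<alpha> * snd s u"
    using th a by (simp add: mult_left_mono)
  then show ?case using IH by (simp add: algebra_simps)
qed

lemma p_support:
  "fst (run_pushes lazy E V \<alpha> s us) j \<noteq> 0 \<Longrightarrow> fst s j \<noteq> 0 \<or> j \<in> set us"
proof (induction us arbitrary: s)
  case Nil
  then show ?case by simp
next
  case (Cons u us)
  then have "fst (push lazy E V \<alpha> u s) j \<noteq> 0 \<or> j \<in> set us" by simp
  then show ?case by (auto simp: push_def Let_def split: if_splits)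
qed

lemma length_le_sum:
  assumes "\<forall>u\<in>set us. deg E V u \<ge> 1"
  shows "real (length us) \<le> (\<Sum>u\<leftarrow>us. real (deg E V u))"
  using assms by (induction us) (auto simp: add_mono)

theorem theorem1:
  shows "\<exists>C>0. \<forall>(V::nat set) E v (d::nat) (\<alpha>::real) (\<epsilon>::real) lazy us.
    graph_ok V E \<and> (\<forall>u\<in>V. deg E V u \<ge> 1) \<and> v \<in> V \<and> d \<ge> 1
    \<and> 0 < \<alpha> \<and> \<alpha> < 1 \<and> \<epsilon> > 0
    \<and> valid_pushes lazy E V \<alpha> \<epsilon> (ppr_init v) us
    \<longrightarrow> ie_cost lazy E V \<alpha> v d us \<le> C * (real d + 1 / (\<alpha> * (1 - \<alpha>) * \<epsilon>))"
proof (intro exI[of _ 3] conjI allI impI)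
  show "(0::real) < 3" by simp
next
  fix V :: "nat set" and E :: "nat \<Rightarrow> nat \<Rightarrow> bool" and v d :: nat and lazy :: bool and us :: "nat list" and \<alpha> \<epsilon> :: real
  assume H: "graph_ok V E \<and> (\<forall>u\<in>V. deg E V u \<ge> 1) \<and> v \<in> V \<and> d \<ge> 1
    \<and> 0 < \<alpha> \<and> \<alpha> < 1 \<and> \<epsilon> > 0
    \<and> valid_pushes lazy E V \<alpha> \<epsilon> (ppr_init v) us"
  then have g: "graph_ok V E" and dg: "\<forall>u\<in>V. deg E V u \<ge> 1" and v: "v \<in> V"
    and a0: "0 < \<alpha>" and a1: "\<alpha> < 1" and e0: "\<epsilon> > 0"
    and vp: "valid_pushes lazy E V \<alpha> \<epsilon> (ppr_init v) us" by auto
  have fin: "finite V" using g by (simp add: graph_ok_def)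
  define S where "S = (\<Sum>u\<leftarrow>us. real (deg E V u))"
  define X where "X = 1 / (\<alpha> * \<epsilon>)"
  have init: "sum (snd (ppr_init v)) V = 1"
    using fin v by (simp add: ppr_init_def)
  have "\<alpha> * \<epsilon> * S \<le> 1"
    using deg_bound[OF g dg a0 a1, of "ppr_init v" lazy \<epsilon> us] vp init
    by (simp add: S_def ppr_init_def)
  then have SX: "S \<le> X" unfolding X_def using a0 e0
    by (simp add: field_simps)
  have usV: "set us \<subseteq> V"
  proof -
    have "\<And>s. valid_pushes lazy E V \<alpha> \<epsilon> s us \<Longrightarrow> set us \<subseteq> V"
      by (induction us arbitrary: s) (simp_all, blast)
    then show ?thesis using vp by blast
  qed
  have LS: "real (length us) \<le> S" unfolding S_def
    using length_le_sum[of us E V] usV dg by auto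
  have "{j \<in> V. fst (run_pushes lazy E V \<alpha> (ppr_init v) us) j \<noteq> 0} \<subseteq> set us"
    using p_support[of lazy E V \<alpha> "ppr_init v" us] by (auto simp: ppr_init_def)
  then have "card {j \<in> V. fst (run_pushes lazy E V \<alpha> (ppr_init v) us) j \<noteq> 0} \<le> card (set us)"
    by (simp add: card_mono)
  also have "\<dots> \<le> length us" by (rule card_length)
  finally have C: "real (card {j \<in> V. fst (run_pushes lazy E V \<alpha> (ppr_init v) us) j \<noteq> 0}) \<le> S"
    using LS by linarith
  have sl: "(\<Sum>u\<leftarrow>us. real (deg E V u) + 1) = S + real (length us)"
    unfolding S_def by (simp add: sum_list_addf sum_list_triv)
  have cost: "ie_cost lazy E V \<alpha> v d us \<le> real d + 3 * X"
    unfolding ie_cost_def sl using C LS SX by linarith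
  have "X \<le> 1 / (\<alpha> * (1 - \<alpha>) * \<epsilon>)"
    unfolding X_def using a0 a1 e0
    by (intro divide_left_mono mult_pos_pos) (auto simp: mult_le_cancel_left1 mult_le_cancel_right1 algebra_simps)
  then show "ie_cost lazy E V \<alpha> v d us \<le> 3 * (real d + 1 / (\<alpha> * (1 - \<alpha>) * \<epsilon>))"
    using cost by (simp add: distrib_left)
qed

end
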